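(* Let $p$ be a prime, and let $f:V_m\to\mathbb{F}_p$ be a dual-bent function and $g:V_n\to\mathbb{F}_p$ a non-dual-bent function, where $V_m,V_n$ are $\mathbb{F}_p$-vector spaces of dimensions $m,n$ with nondegenerate inner products. Then the direct sum $F:V_m\times V_n\to\mathbb{F}_p$, $F(x,y)=f(x)+g(y)$, is a non-dual-bent function.
   Context: Walsh transform of $f:V\to\mathbb{F}_p$ ($\dim V=N$): $\widehat f(b)=\sum_{x\in V}\epsilon_p^{f(x)-\langle b,x\rangle}$, $\epsilon_p=e^{2\pi i/p}$; on $V_m\times V_n$ use $\langle(a,b),(x,y)\rangle=\langle a,x\rangle+\langle b,y\rangle$. $f$ is bent if $|\widehat f(b)|=p^{N/2}$ for all $b$; then $\widehat f(b)=\zeta_bp^{N/2}\epsilon_p^{f^*(b)}$ for some $\zeta_b\in\{\pm1,\pm i\}$ (for $p=2$, $\zeta_b=1$ and $\epsilon_2^{f^*(b)}=(-1)^{f^*(b)}$), defining the dual $f^*$. A bent function is dual-bent if its dual is bent, and non-dual-bent if it is bent but its dual is not bent. *)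

theory Defs
  imports Complex_Main "HOL-Computational_Algebra.Primes"
begin

definition Vsp :: "nat \<Rightarrow> nat \<Rightarrow> (nat \<Rightarrow> int) set" where
  "Vsp p m = {x. \<forall>i. (i < m \<longrightarrow> 0 \<le> x i \<and> x i < int p) \<and> (m \<le> i \<longrightarrow> x i = 0)}"

text \<open>Bilinear form on F_p^m given by a Gram matrix A (values taken mod p).\<close>
definition bform :: "nat \<Rightarrow> (nat \<Rightarrow> nat \<Rightarrow> int) \<Rightarrow> (nat \<Rightarrow> int) \<Rightarrow> (nat \<Rightarrow> int) \<Rightarrow> int" where
  "bform m A x y = (\<Sum>i<m. \<Sum>j<m. x i * A i j * y j)"

definition inner_prod_matrix :: "nat \<Rightarrow> nat \<Rightarrow> (nat \<Rightarrow> nat \<Rightarrow> int) \<Rightarrow> bool" where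
  "inner_prod_matrix p m A \<longleftrightarrow>
     (\<forall>i<m. \<forall>j<m. A i j mod int p = A j i mod int p) \<and>
     (\<forall>b\<in>Vsp p m. (\<forall>x\<in>Vsp p m. bform m A x b mod int p = 0) \<longrightarrow> b = (\<lambda>_. 0))"

definition eps :: "nat \<Rightarrow> int \<Rightarrow> complex" where
  "eps p k = cis (2 * pi * real_of_int k / real p)"

definition walsh :: "nat \<Rightarrow> 'v set \<Rightarrow> ('v \<Rightarrow> 'v \<Rightarrow> int) \<Rightarrow> ('v \<Rightarrow> int) \<Rightarrow> 'v \<Rightarrow> complex" where
  "walsh p S B f b = (\<Sum>x\<in>S. eps p (f x - B b x))"

definition bent :: "nat \<Rightarrow> nat \<Rightarrow> 'v set \<Rightarrow> ('v \<Rightarrow> 'v \<Rightarrow> int) \<Rightarrow> ('v \<Rightarrow> int) \<Rightarrow> bool" where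
  "bent p N S B f \<longleftrightarrow> (\<forall>b\<in>S. cmod (walsh p S B f b) = sqrt (real p) ^ N)"

definition is_dual :: "nat \<Rightarrow> nat \<Rightarrow> 'v set \<Rightarrow> ('v \<Rightarrow> 'v \<Rightarrow> int) \<Rightarrow> ('v \<Rightarrow> int) \<Rightarrow> ('v \<Rightarrow> int) \<Rightarrow> bool" where
  "is_dual p N S B f fs \<longleftrightarrow>
     (\<forall>b\<in>S. 0 \<le> fs b \<and> fs b < int p \<and>
        (\<exists>z. (if p = 2 then z = 1 else z \<in> {1, -1, \<i>, -\<i>}) \<and>
             walsh p S B f b = z * complex_of_real (sqrt (real p) ^ N) * eps p (fs b)))"

definition dual_bent :: "nat \<Rightarrow> nat \<Rightarrow> 'v set \<Rightarrow> ('v \<Rightarrow> 'v \<Rightarrow> int) \<Rightarrow> ('v \<Rightarrow> int) \<Rightarrow> bool" where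
  "dual_bent p N S B f \<longleftrightarrow> bent p N S B f \<and> (\<exists>fs. is_dual p N S B f fs \<and> bent p N S B fs)"

definition non_dual_bent :: "nat \<Rightarrow> nat \<Rightarrow> 'v set \<Rightarrow> ('v \<Rightarrow> 'v \<Rightarrow> int) \<Rightarrow> ('v \<Rightarrow> int) \<Rightarrow> bool" where
  "non_dual_bent p N S B f \<longleftrightarrow> bent p N S B f \<and> (\<exists>fs. is_dual p N S B f fs \<and> \<not> bent p N S B fs)"

end

theory Submission
  imports Defs
begin

lemma eps_add: "eps p (k + l) = eps p k * eps p l"
  unfolding eps_def by (simp add: cis_mult[symmetric] add_divide_distrib distrib_left)

lemma eps_mod: assumes "p > 0" shows "eps p (k mod int p) = eps p k"
proof -
  have k: "k = int p * (k div int p) + k mod int p" by simp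
  have "eps p (int p * (k div int p)) = 1"
  proof -
    have "2 * pi * real_of_int (int p * (k div int p)) / real p = 2 * pi * real_of_int (k div int p)"
      using assms by simp
    thus ?thesis unfolding eps_def by (simp add: cis_multiple_2pi)
  qed
  hence "eps p k = eps p (k mod int p)"
    by (subst k, subst eps_add) simp
  thus ?thesis by simp
qed

lemma eps_mod_diff: assumes "p > 0" shows "eps p (a mod int p - c) = eps p (a - c)"
proof -
  have "eps p (a mod int p - c) = eps p ((a mod int p - c) mod int p)" using eps_mod[OF assms] by simp
  also have "\<dots> = eps p ((a - c) mod int p)" by (simp add: mod_diff_left_eq)
  also have "\<dots> = eps p (a - c)" using eps_mod[OF assms] by simp
  finally show ?thesis .
qed

lemma walsh_prod:
  "walsh p (S \<times> T) (\<lambda>(a, b) (x, y). B1 a x + B2 b y) (\<lambda>(x, y). f x + g y) (a, b)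
   = walsh p S B1 f a * walsh p T B2 g b"
proof -
  have "walsh p S B1 f a * walsh p T B2 g b
      = (\<Sum>x\<in>S. \<Sum>y\<in>T. eps p (f x - B1 a x) * eps p (g y - B2 b y))"
    unfolding walsh_def by (rule sum_product)
  also have "\<dots> = (\<Sum>x\<in>S. \<Sum>y\<in>T. eps p ((f x + g y) - (B1 a x + B2 b y)))"
    by (simp add: eps_add[symmetric] algebra_simps)
  also have "\<dots> = walsh p (S \<times> T) (\<lambda>(a, b) (x, y). B1 a x + B2 b y) (\<lambda>(x, y). f x + g y) (a, b)"
    unfolding walsh_def by (simp add: sum.cartesian_product split_def)
  finally show ?thesis by simp
qed

lemma zero_Vsp: "p > 0 \<Longrightarrow> (\<lambda>_. 0) \<in> Vsp p m"
  unfolding Vsp_def by auto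

theorem theorem2:
  fixes p m n :: nat
    and A C :: "nat \<Rightarrow> nat \<Rightarrow> int"
    and f g :: "(nat \<Rightarrow> int) \<Rightarrow> int"
  assumes "prime p"
    and "inner_prod_matrix p m A"
    and "inner_prod_matrix p n C"
    and "dual_bent p m (Vsp p m) (bform m A) f"
    and "non_dual_bent p n (Vsp p n) (bform n C) g"
  shows "non_dual_bent p (m + n) (Vsp p m \<times> Vsp p n)
           (\<lambda>(a, b) (x, y). bform m A a x + bform n C b y)
           (\<lambda>(x, y). f x + g y)"
proof -
  have p0: "p > 0" using assms(1) prime_gt_0_nat by blast
  have sp: "sqrt (real p) > 0" using p0 by simp
  obtain fs where bf: "bent p m (Vsp p m) (bform m A) f"
    and df: "is_dual p m (Vsp p m) (bform m A) f fs" and bfs: "bent p m (Vsp p m) (bform m A) fs"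
    using assms(4) unfolding dual_bent_def by blast
  obtain gs where bg: "bent p n (Vsp p n) (bform n C) g"
    and dg: "is_dual p n (Vsp p n) (bform n C) g gs" and bgs: "\<not> bent p n (Vsp p n) (bform n C) gs"
    using assms(5) unfolding non_dual_bent_def by blast
  let ?B = "\<lambda>(a, b) (x, y). bform m A a x + bform n C b y"
  let ?S = "Vsp p m \<times> Vsp p n"
  define Fs where "Fs = (\<lambda>(a::nat\<Rightarrow>int, b::nat\<Rightarrow>int). (fs a + gs b) mod int p)"
  have bentF: "bent p (m + n) ?S ?B (\<lambda>(x, y). f x + g y)"
    unfolding bent_def
  proof
    fix ab assume "ab \<in> ?S"
    then obtain a b where ab: "ab = (a, b)" "a \<in> Vsp p m" "b \<in> Vsp p n" by auto
    show "cmod (walsh p ?S ?B (\<lambda>(x, y). f x + g y) ab) = sqrt (real p) ^ (m + n)"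
      using ab bf bg unfolding bent_def
      by (simp add: walsh_prod norm_mult power_add)
  qed
  have dualF: "is_dual p (m + n) ?S ?B (\<lambda>(x, y). f x + g y) Fs"
    unfolding is_dual_def
  proof
    fix ab assume "ab \<in> ?S"
    then obtain a b where ab: "ab = (a, b)" "a \<in> Vsp p m" "b \<in> Vsp p n" by auto
    obtain z1 where z1: "(if p = 2 then z1 = 1 else z1 \<in> {1, -1, \<i>, -\<i>})"
      "walsh p (Vsp p m) (bform m A) f a = z1 * complex_of_real (sqrt (real p) ^ m) * eps p (fs a)"
      using df ab unfolding is_dual_def by blast
    obtain z2 where z2: "(if p = 2 then z2 = 1 else z2 \<in> {1, -1, \<i>, -\<i>})"
      "walsh p (Vsp p n) (bform n C) g b = z2 * complex_of_real (sqrt (real p) ^ n) * eps p (gs b)"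
      using dg ab unfolding is_dual_def by blast
    have zz: "(if p = 2 then z1 * z2 = 1 else z1 * z2 \<in> {1, -1, \<i>, -\<i>})"
      using z1(1) z2(1) by (auto split: if_splits)
    have "walsh p ?S ?B (\<lambda>(x, y). f x + g y) ab
        = (z1 * z2) * complex_of_real (sqrt (real p) ^ (m + n)) * eps p (Fs ab)"
      using ab z1(2) z2(2) p0
      by (simp add: walsh_prod Fs_def eps_mod eps_add power_add)
    moreover have "0 \<le> Fs ab \<and> Fs ab < int p" using p0 ab by (simp add: Fs_def)
    ultimately show "0 \<le> Fs ab \<and> Fs ab < int p \<and>
        (\<exists>z. (if p = 2 then z = 1 else z \<in> {1, -1, \<i>, -\<i>}) \<and>
             walsh p ?S ?B (\<lambda>(x, y). f x + g y) ab = z * complex_of_real (sqrt (real p) ^ (m + n)) * eps p (Fs ab))"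
      using zz by blast
  qed
  have nbF: "\<not> bent p (m + n) ?S ?B Fs"
  proof
    assume H: "bent p (m + n) ?S ?B Fs"
    obtain d where d: "d \<in> Vsp p n" "cmod (walsh p (Vsp p n) (bform n C) gs d) \<noteq> sqrt (real p) ^ n"
      using bgs unfolding bent_def by blast
    let ?c = "(\<lambda>_. 0) :: nat \<Rightarrow> int"
    have c: "?c \<in> Vsp p m" using p0 by (rule zero_Vsp)
    have w: "walsh p ?S ?B Fs (?c, d) = walsh p (Vsp p m) (bform m A) fs ?c * walsh p (Vsp p n) (bform n C) gs d"
    proof -
      have "walsh p ?S ?B Fs (?c, d) = walsh p ?S ?B (\<lambda>(x, y). fs x + gs y) (?c, d)"
        unfolding walsh_def Fs_def
        by (rule sum.cong) (auto simp: eps_mod_diff[OF p0])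
      thus ?thesis by (simp add: walsh_prod)
    qed
    have "cmod (walsh p ?S ?B Fs (?c, d)) = sqrt (real p) ^ (m + n)"
      using H c d(1) unfolding bent_def by auto
    moreover have "cmod (walsh p (Vsp p m) (bform m A) fs ?c) = sqrt (real p) ^ m"
      using bfs c unfolding bent_def by auto
    ultimately have "sqrt (real p) ^ m * cmod (walsh p (Vsp p n) (bform n C) gs d) = sqrt (real p) ^ m * sqrt (real p) ^ n"
      using w by (simp add: norm_mult power_add)
    thus False using d(2) sp by simp
  qed
  show ?thesis unfolding non_dual_bent_def using bentF dualF nbF by blast
qed

end
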